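(* The equation $x+y+z=1$ with $x,y,z\in\mathcal{B}_{2,1}$ and $x\le y\le z$ has exactly two solutions: $$x=2-\sqrt3=[3,\overline{1,2}],\quad y=z=\frac{\sqrt3-1}{2}=[\overline{2,1}],$$ and $$x=y=\frac{2-\sqrt2}{2}=[3,\overline{2}],\quad z=\sqrt2-1=[\overline{2}].$$
   Context: For irrational $x\in(0,1)$, $x=[a_1(x),a_2(x),\dots]$ denotes its simple continued fraction expansion; an overline denotes a periodically repeated block. For a positive integer $B$ and $j\ge0$, $\mathcal{B}_{B,j}$ is the set of irrational $x\in(0,1)$ with $a_k(x)\le B+1$ for all $k\le j$ and $a_k(x)\le B$ for all $k>j$. Thus $\mathcal{B}_{2,1}$ consists of the irrationals $x\in(0,1)$ with $a_1(x)\le3$ and $a_k(x)\le2$ for all $k\ge2$. *)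

theory Defs
  imports Complex_Main
begin

text \<open>Gauss map T(x) = {1/x}; for irrational x in (0,1), the k-th partial quotient
  (k \<ge> 1) of x = [a_1, a_2, ...] = 1/(a_1 + 1/(a_2 + ...)) is floor(1 / T^(k-1)(x)).\<close>

definition gauss_map :: "real \<Rightarrow> real" where
  "gauss_map x = frac (1 / x)"

definition cf_digit :: "real \<Rightarrow> nat \<Rightarrow> int" where
  "cf_digit x k = \<lfloor>1 / (gauss_map ^^ (k - 1)) x\<rfloor>"

definition bounded_cf :: "nat \<Rightarrow> nat \<Rightarrow> real set" where
  "bounded_cf B j = {x. 0 < x \<and> x < 1 \<and> x \<notin> \<rat> \<and>
      (\<forall>k. 1 \<le> k \<and> k \<le> j \<longrightarrow> cf_digit x k \<le> int B + 1) \<and>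
      (\<forall>k. j < k \<longrightarrow> cf_digit x k \<le> int B)}"

end

theory Submission
  imports Defs "HOL-Computational_Algebra.Primes"
begin


lemma sqrt_prime_irr:
  fixes p :: nat
  assumes "prime p"
  shows "sqrt p \<notin> \<rat>"
proof
  from \<open>prime p\<close> have p: "p > 1" by (rule prime_gt_1_nat)
  assume "sqrt p \<in> \<rat>"
  then obtain m n :: nat
    where n: "n \<noteq> 0"
      and sqrt_rat: "\<bar>sqrt p\<bar> = m / n"
      and "coprime m n" by (rule Rats_abs_nat_div_natE)
  have eq: "m\<^sup>2 = p * n\<^sup>2"
  proof -
    from n and sqrt_rat have "m = \<bar>sqrt p\<bar> * n" by simp
    then have "m\<^sup>2 = (sqrt p)\<^sup>2 * n\<^sup>2" by (simp add: power_mult_distrib)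
    also have "(sqrt p)\<^sup>2 = p" by simp
    also have "\<dots> * n\<^sup>2 = p * n\<^sup>2" by simp
    finally show ?thesis by linarith
  qed
  have "p dvd m \<and> p dvd n"
  proof
    from eq have "p dvd m\<^sup>2" ..
    with \<open>prime p\<close> show "p dvd m" by (rule prime_dvd_power)
    then obtain k where "m = p * k" ..
    with eq have "p * n\<^sup>2 = p\<^sup>2 * k\<^sup>2" by algebra
    with p have "n\<^sup>2 = p * k\<^sup>2" by (simp add: power2_eq_square)
    then have "p dvd n\<^sup>2" ..
    with \<open>prime p\<close> show "p dvd n" by (rule prime_dvd_power)
  qed
  then have "p dvd gcd m n" by simp
  with \<open>coprime m n\<close> have "p = 1" by simp
  with p show False by simp
qed

lemma sqrt2_irr: "sqrt 2 \<notin> \<rat>"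
  using sqrt_prime_irr[of 2] by simp

lemma sqrt3_irr: "sqrt 3 \<notin> \<rat>"
proof -
  have "prime (3::nat)" unfolding prime_nat_iff
  proof (intro conjI allI impI)
    fix m :: nat assume "m dvd 3"
    then have "m \<le> 3" by (simp add: dvd_imp_le)
    then have "m \<in> {0,1,2,3}" by auto
    then show "m = 1 \<or> m = 3" using \<open>m dvd 3\<close> by auto
  qed simp
  then show ?thesis using sqrt_prime_irr[of 3] by simp
qed

lemma irr_lin: assumes "x \<notin> \<rat>" "a \<in> \<rat>" "b \<in> \<rat>" "b \<noteq> 0" shows "a + b * x \<notin> \<rat>"
proof
  assume "a + b * x \<in> \<rat>"
  then have "(a + b*x - a) / b \<in> \<rat>" using assms by (intro Rats_divide Rats_diff) auto
  then show False using assms by simp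
qed

abbreviation G where "G \<equiv> gauss_map"

lemma cf_digit_1: "cf_digit x 1 = \<lfloor>1/x\<rfloor>"
  by (simp add: cf_digit_def)

lemma cf_digit_Suc: "k \<ge> 1 \<Longrightarrow> cf_digit x (Suc k) = cf_digit (G x) k"
  by (cases k) (auto simp: cf_digit_def funpow_swap1)

lemma gauss_props:
  assumes "0 < x" "x < 1" "x \<notin> \<rat>"
  shows "0 < G x" "G x < 1" "G x \<notin> \<rat>" "x = 1 / (of_int \<lfloor>1/x\<rfloor> + G x)" "\<lfloor>1/x\<rfloor> \<ge> 1"
proof -
  have ir: "1/x \<notin> \<rat>"
  proof
    assume "1/x \<in> \<rat>" then have "1/(1/x) \<in> \<rat>" by (rule Rats_divide[OF Rats_1])
    with assms show False by simp
  qed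
  have eq: "G x = 1/x - of_int \<lfloor>1/x\<rfloor>" by (simp add: gauss_map_def frac_def)
  show "G x \<notin> \<rat>"
  proof
    assume "G x \<in> \<rat>"
    then have "G x + of_int \<lfloor>1/x\<rfloor> \<in> \<rat>" by (intro Rats_add) auto
    with ir eq show False by simp
  qed
  show "0 < G x"
  proof -
    have "G x \<ge> 0" by (simp add: gauss_map_def frac_ge_0)
    moreover have "G x \<noteq> 0" using \<open>G x \<notin> \<rat>\<close> by auto
    ultimately show ?thesis by simp
  qed
  show "G x < 1" by (simp add: gauss_map_def frac_lt_1)
  show "x = 1 / (of_int \<lfloor>1/x\<rfloor> + G x)" using eq assms by simp
  have "1/x > 1" using assms by simp
  then show "\<lfloor>1/x\<rfloor> \<ge> 1" by simp
qed

abbreviation E where "E \<equiv> bounded_cf 2 0"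

lemma E_char: "x \<in> E \<longleftrightarrow> (0 < x \<and> x < 1 \<and> x \<notin> \<rat> \<and> \<lfloor>1/x\<rfloor> \<le> 2 \<and> G x \<in> E)"
proof
  assume x: "x \<in> E"
  then have h: "0 < x" "x < 1" "x \<notin> \<rat>" and d: "\<And>k. 0 < k \<Longrightarrow> cf_digit x k \<le> 2"
    by (auto simp: bounded_cf_def)
  have "\<lfloor>1/x\<rfloor> \<le> 2" using d[of 1] unfolding cf_digit_1 by simp
  moreover have "G x \<in> E"
  proof -
    have "cf_digit (G x) k \<le> 2" if "0 < k" for k
      using cf_digit_Suc[of k x] d[of "Suc k"] that by simp
    then show ?thesis using gauss_props[OF h] unfolding bounded_cf_def by auto
  qed
  ultimately show "0 < x \<and> x < 1 \<and> x \<notin> \<rat> \<and> \<lfloor>1/x\<rfloor> \<le> 2 \<and> G x \<in> E" using h by simp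
next
  assume h: "0 < x \<and> x < 1 \<and> x \<notin> \<rat> \<and> \<lfloor>1/x\<rfloor> \<le> 2 \<and> G x \<in> E"
  have "cf_digit x k \<le> 2" if k0: "0 < k" for k
  proof (cases "k = 1")
    case True then show ?thesis using h unfolding True cf_digit_1 by linarith
  next
    case False
    obtain j where "k = Suc j" "j \<ge> 1" using k0 False by (cases k) auto
    then show ?thesis using h cf_digit_Suc[of j x] by (auto simp: bounded_cf_def)
  qed
  then show "x \<in> E" using h by (auto simp: bounded_cf_def)
qed

lemma B_char: "x \<in> bounded_cf 2 1 \<longleftrightarrow> (0 < x \<and> x < 1 \<and> x \<notin> \<rat> \<and> \<lfloor>1/x\<rfloor> \<le> 3 \<and> G x \<in> E)"
proof
  assume x: "x \<in> bounded_cf 2 1"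
  then have h: "0 < x" "x < 1" "x \<notin> \<rat>" and d: "\<And>k. 1 < k \<Longrightarrow> cf_digit x k \<le> 2"
    and d1: "cf_digit x 1 \<le> 3"
    by (auto simp: bounded_cf_def)
  have "\<lfloor>1/x\<rfloor> \<le> 3" using d1 unfolding cf_digit_1 by simp
  moreover have "G x \<in> E"
  proof -
    have "cf_digit (G x) k \<le> 2" if "0 < k" for k
      using cf_digit_Suc[of k x] d[of "Suc k"] that by simp
    then show ?thesis using gauss_props[OF h] unfolding bounded_cf_def by auto
  qed
  ultimately show "0 < x \<and> x < 1 \<and> x \<notin> \<rat> \<and> \<lfloor>1/x\<rfloor> \<le> 3 \<and> G x \<in> E" using h by simp
next
  assume h: "0 < x \<and> x < 1 \<and> x \<notin> \<rat> \<and> \<lfloor>1/x\<rfloor> \<le> 3 \<and> G x \<in> E"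
  have "cf_digit x k \<le> 2" if k1: "1 < k" for k
  proof -
    obtain j where "k = Suc j" "j \<ge> 1" using k1 by (cases k) auto
    then show ?thesis using h cf_digit_Suc[of j x] by (auto simp: bounded_cf_def)
  qed
  moreover have c1: "cf_digit x 1 \<le> 3" using h unfolding cf_digit_1 by linarith
  have A1: "\<forall>k. 1 \<le> k \<and> k \<le> 1 \<longrightarrow> cf_digit x k \<le> int 2 + 1"
  proof (intro allI impI)
    fix k :: nat assume "1 \<le> k \<and> k \<le> 1"
    then have "k = 1" by simp
    then show "cf_digit x k \<le> int 2 + 1" using c1 by simp
  qed
  ultimately show "x \<in> bounded_cf 2 1" using h A1 unfolding bounded_cf_def by simp
qed

lemma E_dig:
  assumes "w \<in> E"
  shows "G w \<in> E" "w = 1/(1 + G w) \<or> w = 1/(2 + G w)" "0 < w" "w < 1" "0 < G w" "G w < 1"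
proof -
  have h: "0 < w" "w < 1" "w \<notin> \<rat>" "\<lfloor>1/w\<rfloor> \<le> 2" "G w \<in> E" using assms E_char[of w] by blast+
  show "G w \<in> E" "0 < w" "w < 1" using h by auto
  show "0 < G w" "G w < 1" using gauss_props[OF h(1-3)] by auto
  have "\<lfloor>1/w\<rfloor> = 1 \<or> \<lfloor>1/w\<rfloor> = 2" using gauss_props[OF h(1-3)] h(4) by linarith
  then show "w = 1/(1 + G w) \<or> w = 1/(2 + G w)" using gauss_props(4)[OF h(1-3)] by auto
qed

lemma E_ge: assumes "w \<in> E" shows "1/(2 + G w) \<le> w"
proof -
  have "0 < G w" using E_dig[OF assms] by auto
  then have "1/(2 + G w) \<le> 1/(1 + G w)" by (intro divide_left_mono) auto
  then show ?thesis using E_dig(2)[OF assms] by auto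
qed

lemma E_le: assumes "w \<in> E" shows "w \<le> 1/(1 + G w)"
proof -
  have "0 < G w" using E_dig[OF assms] by auto
  then have "1/(2 + G w) \<le> 1/(1 + G w)" by (intro divide_left_mono) auto
  then show ?thesis using E_dig(2)[OF assms] by auto
qed

definition al :: real where "al = (sqrt 3 - 1)/2"
definition be :: real where "be = sqrt 3 - 1"

lemma s3: "sqrt 3 * sqrt 3 = (3::real)" by simp

lemma al_eq: "2*al*al + 2*al = 1"
  unfolding al_def using s3 by (simp add: field_simps)

lemma be_eq: "be*be + 2*be = 2"
  unfolding be_def using s3 by (simp add: field_simps)

lemma s3_bounds: "(1732/1000) < sqrt (3::real)" "sqrt (3::real) < (17321/10000)"
proof -
  show "(1732/1000) < sqrt (3::real)" by (rule real_less_rsqrt) (simp add: power2_eq_square)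
  have "sqrt (3::real) < sqrt ((17321/10000)^2)" by (subst real_sqrt_less_iff) (simp add: power2_eq_square)
  then show "sqrt (3::real) < (17321/10000)" by simp
qed

lemma al_pos: "0 < al" "al < 1" using s3_bounds by (auto simp: al_def)
lemma be_pos: "0 < be" "be < 1" using s3_bounds by (auto simp: be_def)

lemma E_step_lo:
  assumes "y \<in> E" "al - y > 0"
  shows "9*(al - y) \<le> al - G (G y)"
proof -
  define g where "g = G y"
  define w where "w = G g"
  have gE: "g \<in> E" using E_dig(1)[OF assms(1)] g_def by simp
  have wE: "w \<in> E" using E_dig(1)[OF gE] w_def by simp
  have w0: "0 < w" using E_dig(3)[OF wE] .
  have g0: "0 < g" using E_dig(3)[OF gE] .
  have y1: "1/(2+g) \<le> y" using E_ge[OF assms(1)] g_def by simp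
  have g1: "g \<le> 1/(1+w)" using E_le[OF gE] w_def by simp
  have "1/(2 + 1/(1+w)) \<le> 1/(2+g)"
    using g1 g0 w0 by (intro divide_left_mono) (auto intro!: mult_pos_pos add_pos_pos)
  also have "1/(2 + 1/(1+w)) = (1+w)/(3+2*w)" using w0 by (simp add: field_simps)
  finally have yy: "(1+w)/(3+2*w) \<le> y" using y1 by linarith
  have key: "(al*(3+2*w) - (1+w))*(3+2*al) = al - w" using al_eq by algebra
  have id: "al - (1+w)/(3+2*w) = (al - w)/((3+2*al)*(3+2*w))"
  proof -
    have n1: "3+2*w \<noteq> 0" "3+2*al \<noteq> 0" using w0 al_pos by auto
    have "(al - w)/((3+2*al)*(3+2*w)) = ((al*(3+2*w) - (1+w))*(3+2*al))/((3+2*al)*(3+2*w))"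
      by (simp add: key)
    also have "\<dots> = (al*(3+2*w) - (1+w))/(3+2*w)" using n1 by simp
    also have "\<dots> = al - (1+w)/(3+2*w)" using n1 by (simp add: field_simps)
    finally show ?thesis by simp
  qed
  have "al - y \<le> (al - w)/((3+2*al)*(3+2*w))" using yy id by linarith
  moreover have aw: "al - w > 0"
  proof (rule ccontr)
    assume "\<not> al - w > 0"
    then have "(al - w)/((3+2*al)*(3+2*w)) \<le> 0" using al_pos w0
      by (intro divide_nonpos_pos) auto
    then show False using assms(2) \<open>al - y \<le> _\<close> by linarith
  qed
  moreover have "(al - w)/((3+2*al)*(3+2*w)) \<le> (al - w)/9"
  proof -
    have "0 \<le> al*w" using al_pos w0 by simp
    moreover have "(3+2*al)*(3+2*w) = 9 + 6*al+6*w+4*(al*w)" by (simp add: algebra_simps)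
    ultimately have "9 \<le> (3+2*al)*(3+2*w)" using al_pos w0 by linarith
    then show ?thesis using aw by (intro divide_left_mono) auto
  qed
  ultimately have "al - y \<le> (al - w)/9" by linarith
  then show ?thesis unfolding w_def g_def by (simp add: field_simps)
qed

lemma E_step_hi:
  assumes "y \<in> E" "y - be > 0"
  shows "9*(y - be) \<le> G (G y) - be"
proof -
  define g where "g = G y"
  define w where "w = G g"
  have gE: "g \<in> E" using E_dig(1)[OF assms(1)] g_def by simp
  have wE: "w \<in> E" using E_dig(1)[OF gE] w_def by simp
  have w0: "0 < w" using E_dig(3)[OF wE] .
  have g0: "0 < g" using E_dig(3)[OF gE] .
  have y1: "y \<le> 1/(1+g)" using E_le[OF assms(1)] g_def by simp
  have g1: "1/(2+w) \<le> g" using E_ge[OF gE] w_def by simp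
  have "1/(1+g) \<le> 1/(1 + 1/(2+w))"
    using g1 g0 w0 by (intro divide_left_mono) (auto intro!: mult_pos_pos add_pos_pos)
  also have "1/(1 + 1/(2+w)) = (2+w)/(3+w)" using w0 by (simp add: field_simps)
  finally have yy: "y \<le> (2+w)/(3+w)" using y1 by linarith
  have key: "((2+w) - be*(3+w))*(3+be) = w - be"
  proof -
    have "((2+w) - be*(3+w))*(3+be) - (w - be) = -(3+w)*(be*be+2*be-2)" by (simp add: algebra_simps)
    then show ?thesis using be_eq by simp
  qed
  have id: "(2+w)/(3+w) - be = (w - be)/((3+be)*(3+w))"
  proof -
    have n1: "3+w \<noteq> 0" "3+be \<noteq> 0" using w0 be_pos by auto
    have "(w - be)/((3+be)*(3+w)) = (((2+w) - be*(3+w))*(3+be))/((3+be)*(3+w))"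
      by (simp add: key)
    also have "\<dots> = ((2+w) - be*(3+w))/(3+w)" using n1 by simp
    also have "\<dots> = (2+w)/(3+w) - be" using n1 by (simp add: field_simps)
    finally show ?thesis by simp
  qed
  have "y - be \<le> (w - be)/((3+be)*(3+w))" using yy id by linarith
  moreover have aw: "w - be > 0"
  proof (rule ccontr)
    assume "\<not> w - be > 0"
    then have "(w - be)/((3+be)*(3+w)) \<le> 0" using be_pos w0
      by (intro divide_nonpos_pos) auto
    then show False using assms(2) \<open>y - be \<le> _\<close> by linarith
  qed
  moreover have "(w - be)/((3+be)*(3+w)) \<le> (w - be)/9"
  proof -
    have "0 \<le> be*w" using be_pos w0 by simp
    moreover have "(3+be)*(3+w) = 9 + 3*be+3*w+(be*w)" by (simp add: algebra_simps)
    ultimately have "9 \<le> (3+be)*(3+w)" using be_pos w0 by linarith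
    then show ?thesis using aw by (intro divide_left_mono) auto
  qed
  ultimately have "y - be \<le> (w - be)/9" by linarith
  then show ?thesis unfolding w_def g_def by (simp add: field_simps)
qed

lemma E_bounds:
  assumes "y \<in> E" shows "al \<le> y" "y \<le> be"
proof -
  have A: "\<forall>y\<in>E. 9^n*(al - y) \<le> 1" for n :: nat
  proof (induction n)
    case 0 then show ?case using al_pos E_dig(3) by fastforce
  next
    case (Suc n)
    show ?case
    proof
      fix y assume y: "y \<in> E"
      show "9^Suc n*(al - y) \<le> 1"
      proof (cases "al - y > 0")
        case True
        have "9^Suc n*(al - y) = 9^n*(9*(al-y))" by simp
        also have "\<dots> \<le> 9^n * (al - G (G y))" using E_step_lo[OF y True] by simp
        also have "\<dots> \<le> 1" using Suc E_dig(1)[OF E_dig(1)[OF y]] by blast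
        finally show ?thesis .
      next
        case False
        then have "9^Suc n * (al-y) \<le> 0" by (intro mult_nonneg_nonpos) auto
        then show ?thesis by linarith
      qed
    qed
  qed
  show "al \<le> y"
  proof (rule ccontr)
    assume "\<not> al \<le> y"
    then have p: "al - y > 0" by simp
    obtain n where "1/(al - y) < 9^n" using real_arch_pow[of 9] by auto
    then have "1 < 9^n*(al-y)" using p by (simp add: field_simps)
    then show False using A assms by (meson not_le)
  qed
  have B: "\<forall>y\<in>E. 9^n*(y - be) \<le> 1" for n :: nat
  proof (induction n)
    case 0 then show ?case using be_pos E_dig(4) by fastforce
  next
    case (Suc n)
    show ?case
    proof
      fix y assume y: "y \<in> E"
      show "9^Suc n*(y - be) \<le> 1"
      proof (cases "y - be > 0")
        case True
        have "9^Suc n*(y - be) = 9^n*(9*(y - be))" by simp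
        also have "\<dots> \<le> 9^n * (G (G y) - be)" using E_step_hi[OF y True] by simp
        also have "\<dots> \<le> 1" using Suc E_dig(1)[OF E_dig(1)[OF y]] by blast
        finally show ?thesis .
      next
        case False
        then have "9^Suc n * (y - be) \<le> 0" by (intro mult_nonneg_nonpos) auto
        then show ?thesis by linarith
      qed
    qed
  qed
  show "y \<le> be"
  proof (rule ccontr)
    assume "\<not> y \<le> be"
    then have p: "y - be > 0" by simp
    obtain n where "1/(y - be) < 9^n" using real_arch_pow[of 9] by auto
    then have "1 < 9^n*(y - be)" using p by (simp add: field_simps)
    then show False using B assms by (meson not_le)
  qed
qed



definition rho :: "real \<Rightarrow> real" where "rho w = (w - (sqrt 2 - 1))/(w + sqrt 2 + 1)"
definition cc :: real where "cc = 3 - 2*sqrt 2"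
definition kk :: real where "kk = 2*sqrt 2 - 3"

lemma s2: "sqrt 2 * sqrt 2 = (2::real)" by simp
lemma s2': "sqrt 2 * (sqrt 2 * x) = 2 * (x::real)" by (simp add: mult.assoc[symmetric])

lemma s2_bounds: "(14142135/10000000) < sqrt (2::real)" "sqrt (2::real) < (14142136/10000000)"
proof -
  show "(14142135/10000000) < sqrt (2::real)" by (rule real_less_rsqrt) (simp add: power2_eq_square)
  have "sqrt (2::real) < sqrt ((14142136/10000000)^2)" by (subst real_sqrt_less_iff) (simp add: power2_eq_square)
  then show "sqrt (2::real) < (14142136/10000000)" by simp
qed

lemma rho_den: "0 \<le> w \<Longrightarrow> 0 < w + sqrt 2 + 1"
  using s2_bounds by linarith

lemma cross: fixes a b c d :: real shows "b \<noteq> 0 \<Longrightarrow> d \<noteq> 0 \<Longrightarrow> a*d = c*b \<Longrightarrow> a/b = c/d"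
  by (simp add: frac_eq_eq)

lemma gen1: fixes p b c :: real assumes "p \<noteq> 0" shows "(1/p - b)/(1/p + c) = (1 - b*p)/(1 + c*p)"
proof -
  have a: "1/p - b = (1 - b*p)/p" "1/p + c = (1+c*p)/p" using assms by (simp_all add: field_simps)
  show ?thesis unfolding a using assms by simp
qed

lemma gen2: fixes N D c :: real assumes "D \<noteq> 0" "D - c*N \<noteq> 0" shows "(N/D)/(1 - c*(N/D)) = N/(D - c*N)"
  using assms by (simp add: field_simps)

lemma gen3: fixes N D c :: real assumes "D \<noteq> 0" "D + c*N \<noteq> 0" shows "(N/D)/(1 + c*(N/D)) = N/(D + c*N)"
  using assms by (simp add: field_simps)

lemma rho_step: assumes "0 \<le> w" shows "rho (1/(2+w)) = kk * rho w"
proof -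
  have d1: "0 < w + sqrt 2 + 1" using rho_den assms .
  have d3: "2 + w \<noteq> 0" using assms by simp
  have d4: "0 < 1 + (sqrt 2 + 1)*(2+w)" using assms s2_bounds by (simp add: add_pos_pos)
  have e: "rho (1/(2+w)) = (1 - (sqrt 2 - 1)*(2+w))/(1 + (sqrt 2 + 1)*(2+w))"
    unfolding rho_def using gen1[OF d3, of "sqrt 2 - 1" "sqrt 2 + 1"] by (simp add: add.assoc)
  have key: "(1 - (sqrt 2 - 1)*(2+w)) * (w + sqrt 2 + 1) = (kk*(w - (sqrt 2 - 1)))*(1 + (sqrt 2 + 1)*(2+w))"
    unfolding kk_def by (simp add: algebra_simps s2')
  have f: "(1 - (sqrt 2 - 1)*(2+w))/(1 + (sqrt 2 + 1)*(2+w)) = (kk*(w - (sqrt 2 - 1)))/(w + sqrt 2 + 1)"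
    by (rule cross) (use d1 d4 key in auto)
  have g: "kk * rho w = (kk*(w - (sqrt 2 - 1)))/(w + sqrt 2 + 1)" unfolding rho_def by simp
  show ?thesis using e f g by simp
qed

lemma m_id: assumes "0 \<le> w" shows "rho w/(1 - cc*rho w) = (w - (sqrt 2 - 1))/(2*(sqrt 2 - 1)*(w+3))"
proof -
  have d1: "w + sqrt 2 + 1 \<noteq> 0" using rho_den[OF assms] by linarith
  have e: "(w + sqrt 2 + 1) - cc*(w - (sqrt 2 - 1)) = 2*(sqrt 2 - 1)*(w+3)"
    unfolding cc_def by (simp add: algebra_simps s2')
  have d2: "2*(sqrt 2 - 1)*(w+3) \<noteq> 0" using s2_bounds assms by simp
  show ?thesis unfolding rho_def using gen2[OF d1, of cc "w - (sqrt 2 - 1)"] e d2 by simp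
qed

lemma M_id: assumes "0 \<le> w" shows "rho w/(1 + cc*rho w) = (w - (sqrt 2 - 1))/((4 - 2*sqrt 2)*(w+2))"
proof -
  have d1: "w + sqrt 2 + 1 \<noteq> 0" using rho_den[OF assms] by linarith
  have e: "(w + sqrt 2 + 1) + cc*(w - (sqrt 2 - 1)) = (4 - 2*sqrt 2)*(w+2)"
    unfolding cc_def by (simp add: algebra_simps s2')
  have d2: "(4 - 2*sqrt 2)*(w+2) \<noteq> 0" using s2_bounds assms by simp
  show ?thesis unfolding rho_def using gen3[OF d1, of cc "w - (sqrt 2 - 1)"] e d2 by simp
qed

lemma R2: assumes "0 \<le> w" shows "1/(3+w) = (2 - sqrt 2)/2 - (3*sqrt 2 - 4) * (rho w/(1 - cc*rho w))"
proof -
  have d2: "2*(sqrt 2 - 1)*(w+3) \<noteq> 0" using s2_bounds assms by simp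
  have d3: "3 + w \<noteq> 0" using assms by simp
  have "(3*sqrt 2 - 4) * ((w - (sqrt 2 - 1))/(2*(sqrt 2 - 1)*(w+3))) = ((2 - sqrt 2)/2 - 1/(3+w))"
  proof -
    have "(3*sqrt 2 - 4) * ((w - (sqrt 2 - 1))/(2*(sqrt 2 - 1)*(w+3))) =
          ((3*sqrt 2 - 4) * (w - (sqrt 2 - 1)))/(2*(sqrt 2 - 1)*(w+3))" by simp
    also have "\<dots> = ((2 - sqrt 2)*(3+w) - 2)/(2*(3+w))"
      by (rule cross) (use d2 d3 in \<open>auto simp: algebra_simps s2'\<close>)
    also have "\<dots> = (2 - sqrt 2)/2 - 1/(3+w)" using d3 by (simp add: field_simps)
    finally show ?thesis .
  qed
  then show ?thesis unfolding m_id[OF assms] by simp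
qed

lemma R3: assumes "0 \<le> w" shows "1/(2+w) = (sqrt 2 - 1) - 2*(3*sqrt 2 - 4) * (rho w/(1 + cc*rho w))"
proof -
  have d2: "(4 - 2*sqrt 2)*(w+2) \<noteq> 0" using s2_bounds assms by simp
  have d3: "2 + w \<noteq> 0" using assms by simp
  have "2*(3*sqrt 2 - 4) * ((w - (sqrt 2 - 1))/((4 - 2*sqrt 2)*(w+2))) = (sqrt 2 - 1) - 1/(2+w)"
  proof -
    have "2*(3*sqrt 2 - 4) * ((w - (sqrt 2 - 1))/((4 - 2*sqrt 2)*(w+2))) =
          (2*(3*sqrt 2 - 4) * (w - (sqrt 2 - 1)))/((4 - 2*sqrt 2)*(w+2))" by simp
    also have "\<dots> = ((sqrt 2 - 1)*(2+w) - 1)/(2+w)"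
      by (rule cross) (use d2 d3 in \<open>auto simp: algebra_simps s2'\<close>)
    also have "\<dots> = (sqrt 2 - 1) - 1/(2+w)" using d3 by (simp add: field_simps)
    finally show ?thesis .
  qed
  then show ?thesis unfolding M_id[OF assms] by simp
qed

lemma T_bounds:
  fixes mu X :: real
  assumes "\<bar>mu\<bar> \<le> (172/1000)" "-(1735/100000) \<le> X" "X \<le> 1"
  shows "-(175/10000) \<le> X/(1 - mu*X)" "(545/10000) \<le> X \<Longrightarrow> (539/10000) \<le> X/(1 - mu*X)"
proof -
  have ab: "\<bar>mu*X\<bar> \<le> (172/1000)*\<bar>X\<bar>" unfolding abs_mult by (rule mult_right_mono) (use assms in auto)
  have aX: "\<bar>X\<bar> \<le> 1" using assms by linarith
  have "(172/1000)*\<bar>X\<bar> \<le> (172/1000)*1" using aX by (rule mult_left_mono) simp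
  then have den: "0 < 1 - mu*X" using ab abs_ge_self[of "mu*X"] by linarith
  show "-(175/10000) \<le> X/(1 - mu*X)"
  proof (cases "X \<ge> 0")
    case True
    then have "0 \<le> X/(1 - mu*X)" using den by simp
    then show ?thesis by linarith
  next
    case False
    then have "\<bar>X\<bar> \<le> (1735/100000)" using assms by linarith
    then have "(172/1000)*\<bar>X\<bar> \<le> (172/1000)*(1735/100000)" by (rule mult_left_mono) simp
    then have "mu*X \<le> (172/1000)*(1735/100000)" using ab abs_ge_self[of "mu*X"] by linarith
    then have "-(175/10000)*(1 - mu*X) \<le> X" using assms(2) by (simp add: right_diff_distrib)
    then show ?thesis by (subst pos_le_divide_eq[OF den])
  qed
  assume X: "(545/10000) \<le> X"
  have "-(172/1000)*X \<le> mu*X" using X assms(1) by (intro mult_right_mono) auto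
  then have "(539/10000)*(1 - mu*X) \<le> X" using X by (simp add: right_diff_distrib)
  then show "(539/10000) \<le> X/(1 - mu*X)" by (subst pos_le_divide_eq[OF den])
qed

lemma cc_bounds: "(1715/10000) < cc" "cc < (1716/10000)" "0 < cc" using s2_bounds unfolding cc_def by linarith+
lemma kk_cc: "kk = - cc" by (simp add: kk_def cc_def)


lemma KL:
  fixes l X Y Z :: real
  assumes "\<bar>l\<bar> \<le> 1" "-(1735/100000) \<le> X" "X \<le> 1" "-(1735/100000) \<le> Y" "Y \<le> 1" "-(1735/100000) \<le> Z" "Z \<le> 1"
    and eq: "X/(1 - cc*l*X) + Y/(1 - cc*l*Y) + 2*(Z/(1 + cc*l*Z)) = 0"
  shows "X < (545/10000)" "Y < (545/10000)" "Z < (545/10000)"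
proof -
  have m1: "\<bar>cc*l\<bar> \<le> (172/1000)"
  proof -
    have "\<bar>cc*l\<bar> = cc*\<bar>l\<bar>" using cc_bounds by (simp add: abs_mult)
    moreover have "cc*\<bar>l\<bar> \<le> cc*1" using assms(1) cc_bounds by (intro mult_left_mono) auto
    ultimately show ?thesis using cc_bounds by linarith
  qed
  have m2: "\<bar>-(cc*l)\<bar> \<le> (172/1000)" using m1 by simp
  define P where "P = X/(1 - cc*l*X)"
  define Q where "Q = Y/(1 - cc*l*Y)"
  define R where "R = Z/(1 + cc*l*Z)"
  have e: "P + Q + 2*R = 0" using eq unfolding P_def Q_def R_def .
  have p1: "-(175/10000) \<le> P" "(545/10000) \<le> X \<Longrightarrow> (539/10000) \<le> P"
    unfolding P_def using T_bounds[OF m1 assms(2,3)] by auto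
  have q1: "-(175/10000) \<le> Q" "(545/10000) \<le> Y \<Longrightarrow> (539/10000) \<le> Q"
    unfolding Q_def using T_bounds[OF m1 assms(4,5)] by auto
  have r1: "-(175/10000) \<le> R" "(545/10000) \<le> Z \<Longrightarrow> (539/10000) \<le> R"
    unfolding R_def using T_bounds[OF m2 assms(6,7)] by simp_all
  show "X < (545/10000)"
  proof (rule ccontr)
    assume "\<not> X < (545/10000)"
    then have "(539/10000) \<le> P" using p1 by simp
    then show False using q1(1) r1(1) e by linarith
  qed
  show "Y < (545/10000)"
  proof (rule ccontr)
    assume "\<not> Y < (545/10000)"
    then have "(539/10000) \<le> Q" using q1 by simp
    then show False using p1(1) r1(1) e by linarith
  qed
  show "Z < (545/10000)"
  proof (rule ccontr)
    assume "\<not> Z < (545/10000)"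
    then have "(539/10000) \<le> R" using r1 by simp
    then show False using p1(1) q1(1) e by linarith
  qed
qed

lemma rho_lo: assumes "(366/1000) \<le> w" shows "-(1735/100000) \<le> rho w"
proof -
  have d: "0 < w + sqrt 2 + 1" using rho_den assms by simp
  have "-(1735/100000) * (w + sqrt 2 + 1) \<le> w - (sqrt 2 - 1)" using assms s2_bounds unfolding ring_distribs by linarith
  then show ?thesis unfolding rho_def using d by (simp add: le_divide_eq)
qed

lemma rho_big: assumes "(57733/100000) \<le> w" shows "(545/10000) \<le> rho w"
proof -
  have d: "0 < w + sqrt 2 + 1" using rho_den assms by simp
  have "(545/10000) * (w + sqrt 2 + 1) \<le> w - (sqrt 2 - 1)" using assms s2_bounds unfolding ring_distribs by linarith
  then show ?thesis unfolding rho_def using d by (simp add: le_divide_eq)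
qed

lemma rho_le1: assumes "0 \<le> w" shows "rho w \<le> 1"
proof -
  have d: "0 < w + sqrt 2 + 1" using rho_den assms by simp
  have "w - (sqrt 2 - 1) \<le> 1*(w + sqrt 2 + 1)" using s2_bounds unfolding ring_distribs by linarith
  then show ?thesis unfolding rho_def using d by (simp add: divide_le_eq)
qed

lemma rho_ge_m1: assumes "0 \<le> w" shows "-1 \<le> rho w"
proof -
  have d: "0 < w + sqrt 2 + 1" using rho_den assms by simp
  have "-1*(w + sqrt 2 + 1) \<le> w - (sqrt 2 - 1)" using s2_bounds assms unfolding ring_distribs by linarith
  then show ?thesis unfolding rho_def using d by (simp add: le_divide_eq)
qed

lemma rho_zero: assumes "0 \<le> w" "rho w = 0" shows "w = sqrt 2 - 1"
  using assms rho_den[OF assms(1)] unfolding rho_def by simp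

lemma E_big: assumes "w \<in> E" "w = 1/(1 + G w)" shows "(57733/100000) \<le> w"
proof -
  have g: "G w \<le> be" "0 < G w" using E_bounds E_dig assms(1) by auto
  have "1/(1 + be) \<le> 1/(1 + G w)" using g by (intro divide_left_mono) auto
  moreover have "1/(1+be) \<ge> (57733/100000)" using s3_bounds unfolding be_def by (simp add: field_simps)
  ultimately show ?thesis using assms(2) by linarith
qed

lemma E_366: assumes "w \<in> E" shows "(366/1000) \<le> w"
proof -
  have "366/1000 \<le> (sqrt 3 - 1)/(2::real)" using s3_bounds by (simp add: field_simps)
  then show ?thesis using E_bounds(1)[OF assms] unfolding al_def by linarith
qed




lemma descent:
  assumes sE: "s \<in> E" and tE: "t \<in> E" and uE: "u \<in> E"
    and eq: "rho s/(1 - cc*rho s) + rho t/(1 - cc*rho t) + 2*(rho u/(1 + cc*rho u)) = 0"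
  shows "s = sqrt 2 - 1" "t = sqrt 2 - 1" "u = sqrt 2 - 1"
proof -
  have step: "\<And>a. a \<in> E \<Longrightarrow> rho a < (545/10000) \<Longrightarrow> a = 1/(2 + G a)"
    using E_big E_dig(2) rho_big by fastforce
  have I: "(G^^n) s \<in> E \<and> rho s = kk^n * rho ((G^^n) s) \<and>
           (G^^n) t \<in> E \<and> rho t = kk^n * rho ((G^^n) t) \<and>
           (G^^n) u \<in> E \<and> rho u = kk^n * rho ((G^^n) u)" for n
  proof (induction n)
    case 0 then show ?case using assms by simp
  next
    case (Suc n)
    define a where "a = (G^^n) s"
    define b where "b = (G^^n) t"
    define d where "d = (G^^n) u"
    define l where "l = kk^n"
    have aE: "a \<in> E" and bE: "b \<in> E" and dE: "d \<in> E" using Suc a_def b_def d_def by auto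
    have rs: "rho s = l * rho a" "rho t = l * rho b" "rho u = l * rho d" using Suc a_def b_def d_def l_def by auto
    have l0: "l \<noteq> 0" using s2_bounds unfolding l_def kk_def by simp
    have kabs: "\<bar>kk\<bar> \<le> 1" using cc_bounds kk_cc by simp
    have l1: "\<bar>l\<bar> \<le> 1" unfolding l_def power_abs
      by (rule power_le_one) (use kabs in auto)
    have eq2: "l * (rho a/(1 - cc*l*rho a) + rho b/(1 - cc*l*rho b) + 2*(rho d/(1 + cc*l*rho d))) = 0"
      using eq unfolding rs by (simp add: algebra_simps)
    then have eq3: "rho a/(1 - cc*l*rho a) + rho b/(1 - cc*l*rho b) + 2*(rho d/(1 + cc*l*rho d)) = 0"
      using l0 by simp
    have pa: "0 < a" "0 < b" "0 < d" using aE bE dE E_dig(3) by auto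
    note K = KL[OF l1 rho_lo[OF E_366[OF aE]] rho_le1 rho_lo[OF E_366[OF bE]] rho_le1
       rho_lo[OF E_366[OF dE]] rho_le1 eq3]
    have ga: "0 \<le> G a" "0 \<le> G b" "0 \<le> G d" using E_dig(5) aE bE dE by (auto simp: less_imp_le)
    have "a = 1/(2 + G a)" using step[OF aE] K pa by auto
    then have ra: "rho a = kk * rho (G a)" using rho_step[OF ga(1)] by simp
    have "b = 1/(2 + G b)" using step[OF bE] K pa by auto
    then have rb: "rho b = kk * rho (G b)" using rho_step[OF ga(2)] by simp
    have "d = 1/(2 + G d)" using step[OF dE] K pa by auto
    then have rd: "rho d = kk * rho (G d)" using rho_step[OF ga(3)] by simp
    have "(G^^Suc n) s = G a" "(G^^Suc n) t = G b" "(G^^Suc n) u = G d"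
      by (simp_all add: a_def b_def d_def)
    then show ?case using rs ra rb rd E_dig(1)[OF aE] E_dig(1)[OF bE] E_dig(1)[OF dE]
      unfolding l_def by simp
  qed
  have conv: "\<And>w. w \<in> E \<Longrightarrow> (\<forall>n. rho w = kk^n * rho ((G^^n) w) \<and> (G^^n) w \<in> E) \<Longrightarrow> w = sqrt 2 - 1"
  proof -
    fix w assume wE: "w \<in> E" and H: "\<forall>n. rho w = kk^n * rho ((G^^n) w) \<and> (G^^n) w \<in> E"
    have bnd: "\<bar>rho w\<bar> \<le> cc^n" for n
    proof -
      have g: "(G^^n) w \<in> E" using H by blast
      have p: "0 \<le> (G^^n) w" using E_dig(3)[OF g] by simp
      have "\<bar>rho ((G^^n) w)\<bar> \<le> 1" using rho_le1[OF p] rho_ge_m1[OF p] by auto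
      then have "\<bar>kk^n\<bar> * \<bar>rho ((G^^n) w)\<bar> \<le> \<bar>kk^n\<bar> * 1" by (intro mult_left_mono) auto
      moreover have "\<bar>kk^n\<bar> = cc^n" unfolding kk_cc power_abs using cc_bounds by simp
      ultimately show ?thesis using H by (metis abs_mult mult.right_neutral)
    qed
    have "rho w = 0"
    proof (rule ccontr)
      assume "rho w \<noteq> 0"
      then have "0 < \<bar>rho w\<bar>" by simp
      then obtain n where "cc^n < \<bar>rho w\<bar>" using real_arch_pow_inv[of "\<bar>rho w\<bar>" cc] cc_bounds by auto
      then show False using bnd[of n] by simp
    qed
    then show "w = sqrt 2 - 1" using rho_zero E_dig(3)[OF wE] by (simp add: less_imp_le)
  qed
  show "s = sqrt 2 - 1" using conv[OF sE] I by blast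
  show "t = sqrt 2 - 1" using conv[OF tE] I by blast
  show "u = sqrt 2 - 1" using conv[OF uE] I by blast
qed




lemma gsimp:
  assumes "0 < x" "1/x = of_int n + w" "0 \<le> w" "w < 1"
  shows "G x = w" "\<lfloor>1/x\<rfloor> = n"
proof -
  show fl: "\<lfloor>1/x\<rfloor> = n" unfolding assms(2) using assms(3,4) by (intro floor_unique) auto
  show "G x = w" unfolding gauss_map_def frac_def fl using assms(2) by simp
qed

lemma inv_al: "1/al = of_int 2 + be"
proof -
  have "(2 + be)*al = 1" unfolding al_def be_def using s3 by (simp add: field_simps)
  then show ?thesis using al_pos by (simp add: field_simps)
qed

lemma inv_be: "1/be = of_int 1 + al"
proof -
  have "(1 + al)*be = 1" unfolding al_def be_def using s3 by (simp add: field_simps)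
  then show ?thesis using be_pos by (simp add: field_simps)
qed

lemma G_al: "G al = be" "\<lfloor>1/al\<rfloor> = 2"
  using gsimp[OF al_pos(1) inv_al] be_pos by auto

lemma G_be: "G be = al" "\<lfloor>1/be\<rfloor> = 1"
  using gsimp[OF be_pos(1) inv_be] al_pos by auto

lemma al_irr: "al \<notin> \<rat>"
proof -
  have "-(1/2) + (1/2) * sqrt 3 \<notin> \<rat>" by (rule irr_lin[OF sqrt3_irr]) auto
  moreover have "al = -(1/2) + (1/2) * sqrt 3" unfolding al_def by simp
  ultimately show ?thesis by simp
qed

lemma be_irr: "be \<notin> \<rat>"
proof -
  have "-1 + 1 * sqrt 3 \<notin> \<rat>" by (rule irr_lin[OF sqrt3_irr]) auto
  moreover have "be = -1 + 1 * sqrt 3" unfolding be_def by simp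
  ultimately show ?thesis by simp
qed

lemma orbit_ab: "w \<in> {al, be} \<Longrightarrow> (G^^n) w \<in> {al, be}"
  by (induction n) (auto simp: G_al G_be)

lemma ab_E: assumes "w \<in> {al, be}" shows "w \<in> E"
proof -
  have "cf_digit w k \<le> 2" if "0 < k" for k
  proof -
    have "(G^^(k-1)) w \<in> {al, be}" using orbit_ab[OF assms] .
    then consider "(G^^(k-1)) w = al" | "(G^^(k-1)) w = be" by blast
    then show ?thesis
    proof cases
      case 1 show ?thesis unfolding cf_digit_def 1 G_al(2) by simp
    next
      case 2 show ?thesis unfolding cf_digit_def 2 G_be(2) by simp
    qed
  qed
  then show ?thesis using assms al_pos be_pos al_irr be_irr unfolding bounded_cf_def by auto
qed

definition om :: real where "om = sqrt 2 - 1"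

lemma om_pos: "0 < om" "om < 1" using s2_bounds unfolding om_def by auto

lemma inv_om: "1/om = of_int 2 + om"
proof -
  have "(2 + om)*om = 1" unfolding om_def by (simp add: algebra_simps s2')
  then show ?thesis using om_pos by (simp add: field_simps)
qed

lemma G_om: "G om = om" "\<lfloor>1/om\<rfloor> = 2"
  using gsimp[OF om_pos(1) inv_om] om_pos by auto

lemma om_irr: "om \<notin> \<rat>"
proof -
  have "-1 + 1 * sqrt 2 \<notin> \<rat>" by (rule irr_lin[OF sqrt2_irr]) auto
  moreover have "om = -1 + 1 * sqrt 2" unfolding om_def by simp
  ultimately show ?thesis by simp
qed

lemma om_E: "om \<in> E"
proof -
  have o: "(G^^n) om = om" for n by (induction n) (auto simp: G_om)
  have "cf_digit om k \<le> 2" for k unfolding cf_digit_def o G_om by simp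
  then show ?thesis using om_pos om_irr unfolding bounded_cf_def by auto
qed

lemma E_B: assumes "w \<in> E" shows "w \<in> bounded_cf 2 1"
  using assms E_char[of w] B_char[of w] by auto

lemma x1_B: "2 - sqrt 3 \<in> bounded_cf 2 1"
proof -
  have p: "0 < 2 - sqrt 3" "2 - sqrt 3 < 1" using s3_bounds by auto
  have "(3 + be) * (2 - sqrt 3) = 1" unfolding be_def using s3 by (simp add: field_simps)
  then have i: "1/(2 - sqrt 3) = of_int 3 + be" using p by (simp add: field_simps)
  note g = gsimp[OF p(1) i]
  have irr: "2 + (-1) * sqrt 3 \<notin> \<rat>" by (rule irr_lin[OF sqrt3_irr]) auto
  show ?thesis unfolding B_char using g p irr be_pos ab_E[of be] by auto
qed

lemma y2_B: "(2 - sqrt 2)/2 \<in> bounded_cf 2 1"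
proof -
  have p: "0 < (2 - sqrt 2)/2" "(2 - sqrt 2)/2 < 1" using s2_bounds by auto
  have "(3 + om) * ((2 - sqrt 2)/2) = 1" unfolding om_def by (simp add: algebra_simps s2')
  then have i: "1/((2 - sqrt 2)/2) = of_int 3 + om" using p by (simp add: field_simps)
  note g = gsimp[OF p(1) i]
  have irr: "1 + (-1/2) * sqrt 2 \<notin> \<rat>" by (rule irr_lin[OF sqrt2_irr]) auto
  have e: "(2 - sqrt 2)/2 = 1 + (-1/2) * sqrt 2" by simp
  have irr2: "(2 - sqrt 2)/2 \<notin> \<rat>" unfolding e by (rule irr)
  show ?thesis unfolding B_char using g p irr2 om_pos om_E by auto
qed




lemma B_info:
  assumes "x \<in> bounded_cf 2 1"
  obtains (d1) "577/1000 \<le> x"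
    | (d2) "al \<le> x" "x = 1/(2 + G x)"
    | (d3) "2 - sqrt 3 \<le> x" "x \<le> 2972/10000" "x = 1/(3 + G x)"
proof -
  have h: "0 < x" "x < 1" "x \<notin> \<rat>" "\<lfloor>1/x\<rfloor> \<le> 3" "G x \<in> E" using assms B_char[of x] by blast+
  note gp = gauss_props[OF h(1-3)]
  define s where "s = G x"
  have sb: "al \<le> s" "s \<le> be" using E_bounds[OF h(5)] s_def by auto
  have s0: "0 < s" using gp s_def by simp
  have "\<lfloor>1/x\<rfloor> = 1 \<or> \<lfloor>1/x\<rfloor> = 2 \<or> \<lfloor>1/x\<rfloor> = 3" using gp h(4) by linarith
  then consider "x = 1/(1+s)" | "x = 1/(2+s)" | "x = 1/(3+s)" using gp(4) s_def by auto
  then show ?thesis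
  proof cases
    case 1
    have "1/(1 + be) \<le> 1/(1+s)" using sb s0 by (intro divide_left_mono) auto
    moreover have "577/1000 \<le> 1/(1+be)" using s3_bounds unfolding be_def by (simp add: field_simps)
    ultimately have "577/1000 \<le> x" using 1 by linarith
    then show ?thesis by (rule d1)
  next
    case 2
    have "1/(2 + be) \<le> 1/(2+s)" using sb s0 by (intro divide_left_mono) auto
    moreover have "1/(2+be) = al"
    proof -
      have "(2 + be)*al = 1" unfolding al_def be_def using s3 by (simp add: field_simps)
      then show ?thesis using be_pos by (simp add: field_simps)
    qed
    ultimately have "al \<le> x" using 2 by simp
    moreover have "x = 1/(2 + G x)" using 2 unfolding s_def .
    ultimately show ?thesis by (rule d2)
  next
    case 3
    have "1/(3 + be) \<le> 1/(3+s)" using sb s0 by (intro divide_left_mono) auto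
    moreover have "1/(3+be) = 2 - sqrt 3"
    proof -
      have "(3 + be)*(2 - sqrt 3) = 1" unfolding be_def using s3 by (simp add: field_simps)
      then show ?thesis using be_pos by (simp add: field_simps)
    qed
    moreover have "1/(3+s) \<le> 1/(3+al)" using sb al_pos by (intro divide_left_mono) auto
    moreover have "1/(3+al) \<le> 2972/10000" using s3_bounds unfolding al_def by (simp add: field_simps)
    ultimately have "2 - sqrt 3 \<le> x" "x \<le> 2972/10000" using 3 by simp_all
    moreover have "x = 1/(3 + G x)" using 3 unfolding s_def .
    ultimately show ?thesis by (rule d3)
  qed
qed

lemma B_G: "x \<in> bounded_cf 2 1 \<Longrightarrow> G x \<in> E" using B_char by blast

lemma case2:
  assumes "x = 1/(3 + s)" "y = 1/(3 + t)" "z = 1/(2 + u)" "s \<in> E" "t \<in> E" "u \<in> E" "x + y + z = 1"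
  shows "x = (2 - sqrt 2)/2" "y = (2 - sqrt 2)/2" "z = sqrt 2 - 1"
proof -
  have p: "0 \<le> s" "0 \<le> t" "0 \<le> u" using E_dig(3) assms(4-6) by (auto simp: less_imp_le)
  define ms where "ms = rho s/(1 - cc*rho s)"
  define mt where "mt = rho t/(1 - cc*rho t)"
  define mu where "mu = rho u/(1 + cc*rho u)"
  define B where "B = rho s/(1 - cc*rho s) + rho t/(1 - cc*rho t) + 2*(rho u/(1 + cc*rho u))"
  have B': "B = ms + mt + 2*mu" unfolding B_def ms_def mt_def mu_def ..
  have "x + y + z = ((2 - sqrt 2)/2 - (3*sqrt 2 - 4) * ms) + ((2 - sqrt 2)/2 - (3*sqrt 2 - 4) * mt)
     + ((sqrt 2 - 1) - 2*(3*sqrt 2 - 4) * mu)"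
    unfolding assms(1-3) R2[OF p(1)] R2[OF p(2)] R3[OF p(3)] ms_def mt_def mu_def ..
  also have "\<dots> = 1 - (3*sqrt 2 - 4) * B" unfolding B' by (simp add: algebra_simps)
  finally have "x + y + z = 1 - (3*sqrt 2 - 4) * B" .
  then have "(3*sqrt 2 - 4) * B = 0" using assms(7) by simp
  moreover have "3*sqrt 2 - 4 \<noteq> 0" using s2_bounds by simp
  ultimately have "B = 0" by simp
  then have d: "s = sqrt 2 - 1" "t = sqrt 2 - 1" "u = sqrt 2 - 1"
    using descent[OF assms(4-6)] unfolding B_def by auto
  have e1: "1/(3 + (sqrt 2 - 1)) = (2 - sqrt 2)/2"
  proof -
    have "(2 + sqrt 2) * ((2 - sqrt 2)/2) = 1" by (simp add: algebra_simps s2')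
    then show ?thesis using s2_bounds by (simp add: field_simps)
  qed
  have e2: "1/(2 + (sqrt 2 - 1)) = sqrt 2 - 1"
  proof -
    have "(1 + sqrt 2) * (sqrt 2 - 1) = 1" by (simp add: algebra_simps s2')
    then show ?thesis using s2_bounds by (simp add: field_simps)
  qed
  show "x = (2 - sqrt 2)/2" "y = (2 - sqrt 2)/2" "z = sqrt 2 - 1"
    using assms(1-3) d e1 e2 by simp_all
qed

theorem mainTheorem6:
  shows "{(x, y, z). x \<in> bounded_cf 2 1 \<and> y \<in> bounded_cf 2 1 \<and> z \<in> bounded_cf 2 1 \<and>
            x \<le> y \<and> y \<le> z \<and> x + y + z = 1}
       = {(2 - sqrt 3, (sqrt 3 - 1) / 2, (sqrt 3 - 1) / 2),
          ((2 - sqrt 2) / 2, (2 - sqrt 2) / 2, sqrt 2 - 1)}" (is "?L = ?R")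
proof
  show "?R \<subseteq> ?L"
  proof -
    have a: "(sqrt 3 - 1)/2 \<in> bounded_cf 2 1" using E_B[OF ab_E[of al]] unfolding al_def by simp
    have b: "sqrt 2 - 1 \<in> bounded_cf 2 1" using E_B[OF om_E] unfolding om_def .
    have o1: "2 - sqrt 3 \<le> (sqrt 3 - 1)/2" using s3_bounds by simp
    have o2: "(2 - sqrt 2)/2 \<le> sqrt 2 - 1" using s2_bounds by simp
    show ?thesis using a b x1_B y2_B o1 o2 by auto
  qed
  show "?L \<subseteq> ?R"
  proof
    fix p assume "p \<in> ?L"
    then obtain x y z where pd: "p = (x, y, z)" and xB: "x \<in> bounded_cf 2 1" and yB: "y \<in> bounded_cf 2 1"
      and zB: "z \<in> bounded_cf 2 1" and xy: "x \<le> y" and yz: "y \<le> z" and sum: "x + y + z = 1" by blast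
    have al366: "366/1000 \<le> al" using s3_bounds unfolding al_def by simp
    have r3: "2679/10000 \<le> 2 - sqrt 3" using s3_bounds by simp
    have r3u: "2 - sqrt 3 \<le> 268/1000" using s3_bounds by simp
    have lb: "2 - sqrt 3 \<le> w" if "w \<in> bounded_cf 2 1" for w
      using that
    proof (cases rule: B_info)
      case d1 then show ?thesis using r3u by linarith
    next
      case d2 then show ?thesis using al366 r3u by linarith
    next
      case d3 then show ?thesis by simp
    qed
    have lx: "2 - sqrt 3 \<le> x" and ly: "2 - sqrt 3 \<le> y" and lz: "2 - sqrt 3 \<le> z"
      using lb xB yB zB by auto
    have "(x, y, z) \<in> ?R"
      using xB
    proof (cases rule: B_info)
      case d1 then show ?thesis using ly lz r3 sum by linarith
    next
      case d2 then show ?thesis using xy yz al366 sum by linarith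
    next
      case x3: d3
      show ?thesis
        using yB
      proof (cases rule: B_info)
        case d1 then show ?thesis using lx lz r3 sum by linarith
      next
        case y2: d2
        show ?thesis
          using zB
        proof (cases rule: B_info)
          case d1 then show ?thesis using lx ly r3 sum by linarith
        next
          case z2: d2
          have "x = 2 - sqrt 3" "y = al" "z = al"
          proof -
            have "(2 - sqrt 3) + al + al = 1" unfolding al_def by simp
            then show "x = 2 - sqrt 3" "y = al" "z = al" using x3 y2 z2 sum by linarith+
          qed
          then show ?thesis unfolding al_def by simp
        next
          case d3 then show ?thesis using y2 yz al366 by linarith
        qed
      next
        case y3: d3
        show ?thesis
          using zB
        proof (cases rule: B_info)
          case d1 then show ?thesis using lx ly r3 sum by linarith
        next
          case z2: d2
          have c: "x = (2 - sqrt 2)/2" "y = (2 - sqrt 2)/2" "z = sqrt 2 - 1"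
            using case2[OF x3(3) y3(3) z2(2) B_G[OF xB] B_G[OF yB] B_G[OF zB] sum] by auto
          then show ?thesis by simp
        next
          case d3 then show ?thesis using x3 y3 sum by linarith
        qed
      qed
    qed
    then show "p \<in> ?R" using pd by simp
  qed
qed


end
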